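(* Let $L$ be an $\omega$-regular language and let $\mathcal{F}=(M,\{A^u\})$ be the periodic (respectively syntactic, recurrent) FDFA of $L$. Define $UP_{\mathrm{orig}}(\mathcal{F})$ as the set of words $uv^\omega$ ($u\in\Sigma^*$, $v\in\Sigma^+$) such that: in the periodic case, $v\in L(A^{M(u)})$; in the syntactic and recurrent cases, $M(uv)=M(u)$ and $v\in L(A^{M(u)})$. Then $UP_{\mathrm{orig}}(\mathcal{F})=UP(\mathcal{F})$.
   Context: For a complete DFA $A$ and finite word $w$, $A(w)$ is the state reached from the initial state on $w$. An FDFA is $\mathcal{F}=(M,\{A^q\}_{q\in Q})$ with $M$ a complete DFA without accepting states and each $A^q$ a complete DFA; $(u,v)$ is accepted by $\mathcal{F}$ iff $M(uv)=M(u)$ and $v\in L(A^{M(u)})$, and $UP(\mathcal{F})=\{uv^\omega: v\in\Sigma^+,\ (u,v)\text{ accepted}\}$. Canonical FDFAs of an $\omega$-regular $L$: $x\sim_L y$ iff $\forall w\in\Sigma^\omega$, $xw\in L\Leftrightarrow yw\in L$. The leading automaton has states the classes of $\sim_L$, initial state $[\epsilon]$, transitions $[x]\xrightarrow{a}[xa]$. For each state with representative $u$: $x\approx^u_P y$ iff $\forall v\in\Sigma^*$: $u(xv)^\omega\in L\Leftrightarrow u(yv)^\omega\in L$; $x\approx^u_S y$ iff $ux\sim_L uy$ and $\forall v$: $uxv\sim_L u\Rightarrow(u(xv)^\omega\in L\Leftrightarrow u(yv)^\omega\in L)$; $x\approx^u_R y$ iff $\forall v$: $(uxv\sim_L u\wedge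 u(xv)^\omega\in L)\Leftrightarrow(uyv\sim_L u\wedge u(yv)^\omega\in L)$. For $K\in\{P,S,R\}$ the progress automaton $A^u$ has states the classes of $\approx^u_K$, initial state $[\epsilon]$, transitions $[x]\xrightarrow{a}[xa]$, and accepting states the classes $[v]$ with $uv^\omega\in L$ ($K=P$), resp. with $uv\sim_L u$ and $uv^\omega\in L$ ($K\in\{S,R\}$). These are the periodic, syntactic and recurrent FDFAs of $L$. *)

theory Defs
  imports Main "HOL-Library.Omega_Words_Fun"
begin

definition omega_regular :: "('a::finite) word set \<Rightarrow> bool" where
  "omega_regular L \<longleftrightarrow>
     (\<exists>(Q::nat set) (I::nat set) (\<delta>::nat \<Rightarrow> 'a \<Rightarrow> nat set) (F::nat set).
        finite Q \<and> I \<subseteq> Q \<and> (\<forall>q a. \<delta> q a \<subseteq> Q) \<and>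
        L = {w. \<exists>r. r 0 \<in> I \<and> (\<forall>i. r (Suc i) \<in> \<delta> (r i) (w i))
                    \<and> (\<exists>\<^sub>\<infinity> i. r i \<in> F)})"

record ('s, 'a) dfa =
  dinit :: 's
  ddelta :: "'s \<Rightarrow> 'a \<Rightarrow> 's"
  daccept :: "'s set"

definition run :: "('s, 'a) dfa \<Rightarrow> 'a list \<Rightarrow> 's" where
  "run A w = foldl (ddelta A) (dinit A) w"

definition dlang :: "('s, 'a) dfa \<Rightarrow> 'a list set" where
  "dlang A = {w. run A w \<in> daccept A}"

type_synonym ('s, 't, 'a) fdfa = "('s, 'a) dfa \<times> ('s \<Rightarrow> ('t, 'a) dfa)"

definition fdfa_accepts :: "('s, 't, 'a) fdfa \<Rightarrow> 'a list \<Rightarrow> 'a list \<Rightarrow> bool" where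
  "fdfa_accepts F u v \<longleftrightarrow>
     run (fst F) (u @ v) = run (fst F) u \<and> v \<in> dlang (snd F (run (fst F) u))"

definition UP :: "('s, 't, 'a) fdfa \<Rightarrow> 'a word set" where
  "UP F = {u \<frown> v\<^sup>\<omega> | u v. v \<noteq> [] \<and> fdfa_accepts F u v}"

datatype kind = Periodic | Syntactic | Recurrent

definition simL :: "'a word set \<Rightarrow> 'a list \<Rightarrow> 'a list \<Rightarrow> bool" where
  "simL L x y \<longleftrightarrow> (\<forall>w. (x \<frown> w \<in> L) = (y \<frown> w \<in> L))"

text \<open>u w^omega in L; for w = [] the word u w^omega is finite, hence not in L.\<close>
definition per :: "'a word set \<Rightarrow> 'a list \<Rightarrow> 'a list \<Rightarrow> bool" where
  "per L u w \<longleftrightarrow> w \<noteq> [] \<and> u \<frown> w\<^sup>\<omega> \<in> L"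

definition simcls :: "'a word set \<Rightarrow> 'a list \<Rightarrow> 'a list set" where
  "simcls L x = {y. simL L x y}"

definition leading :: "'a word set \<Rightarrow> ('a list set, 'a) dfa" where
  "leading L = \<lparr> dinit = simcls L [],
                 ddelta = (\<lambda>C a. simcls L ((SOME x. x \<in> C) @ [a])),
                 daccept = {} \<rparr>"

definition approx :: "kind \<Rightarrow> 'a word set \<Rightarrow> 'a list \<Rightarrow> 'a list \<Rightarrow> 'a list \<Rightarrow> bool" where
  "approx K L u x y \<longleftrightarrow> (case K of
      Periodic \<Rightarrow> (\<forall>v. per L u (x @ v) = per L u (y @ v))
    | Syntactic \<Rightarrow> simL L (u @ x) (u @ y) \<and>
        (\<forall>v. simL L (u @ x @ v) u \<longrightarrow> (per L u (x @ v) = per L u (y @ v)))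
    | Recurrent \<Rightarrow> (\<forall>v. (simL L (u @ x @ v) u \<and> per L u (x @ v))
                      = (simL L (u @ y @ v) u \<and> per L u (y @ v))))"

definition pcls :: "kind \<Rightarrow> 'a word set \<Rightarrow> 'a list \<Rightarrow> 'a list \<Rightarrow> 'a list set" where
  "pcls K L u x = {y. approx K L u x y}"

definition progress_acc :: "kind \<Rightarrow> 'a word set \<Rightarrow> 'a list \<Rightarrow> 'a list \<Rightarrow> bool" where
  "progress_acc K L u v \<longleftrightarrow> (case K of
      Periodic \<Rightarrow> per L u v
    | _ \<Rightarrow> simL L (u @ v) u \<and> per L u v)"

definition progress :: "kind \<Rightarrow> 'a word set \<Rightarrow> 'a list \<Rightarrow> ('a list set, 'a) dfa" where
  "progress K L u = \<lparr> dinit = pcls K L u [],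
                      ddelta = (\<lambda>C a. pcls K L u ((SOME x. x \<in> C) @ [a])),
                      daccept = {pcls K L u v | v. progress_acc K L u v} \<rparr>"

definition canonical :: "kind \<Rightarrow> 'a word set \<Rightarrow> ('a list set \<Rightarrow> 'a list)
                          \<Rightarrow> ('a list set, 'a list set, 'a) fdfa" where
  "canonical K L rep = (leading L, (\<lambda>C. progress K L (rep C)))"

definition UP_orig :: "kind \<Rightarrow> ('s, 't, 'a) fdfa \<Rightarrow> 'a word set" where
  "UP_orig K F = (if K = Periodic
     then {u \<frown> v\<^sup>\<omega> | u v. v \<noteq> [] \<and> v \<in> dlang (snd F (run (fst F) u))}
     else {u \<frown> v\<^sup>\<omega> | u v. v \<noteq> [] \<and> run (fst F) (u @ v) = run (fst F) u
                              \<and> v \<in> dlang (snd F (run (fst F) u))})"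

end

theory Submission
  imports Defs
begin

lemma simL_refl: "simL L x x" by (simp add: simL_def)
lemma simL_sym: "simL L x y \<Longrightarrow> simL L y x" by (simp add: simL_def)
lemma simL_trans: "simL L x y \<Longrightarrow> simL L y z \<Longrightarrow> simL L x z" by (simp add: simL_def)
lemma simL_cong: assumes "simL L x y" shows "simL L (x @ [a]) (y @ [a])"
  unfolding simL_def
proof
  fix w
  have "(x@[a]) \<frown> w = x \<frown> ([a] \<frown> w)" "(y@[a]) \<frown> w = y \<frown> ([a] \<frown> w)" by simp_all
  then show "((x @ [a]) \<frown> w \<in> L) = ((y @ [a]) \<frown> w \<in> L)"
    using assms unfolding simL_def by simp
qed

lemma simcls_eq: assumes "simL L x y" shows "simcls L x = simcls L y"
  using assms unfolding simcls_def simL_def by simp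

lemma simcls_mem: "z \<in> simcls L x \<longleftrightarrow> simL L x z" by (simp add: simcls_def)

lemma simcls_eq_iff: "simcls L x = simcls L y \<longleftrightarrow> simL L x y"
proof
  assume e: "simcls L x = simcls L y"
  have "y \<in> simcls L y" by (simp add: simcls_mem simL_refl)
  then have "y \<in> simcls L x" using e by (simp only:)
  then show "simL L x y" by (simp only: simcls_mem)
qed (rule simcls_eq)

lemma run_leading: "run (leading L) w = simcls L w"
proof (induction w rule: rev_induct)
  case Nil then show ?case by (simp add: run_def leading_def)
next
  case (snoc a w)
  define z where "z = (SOME x. x \<in> simcls L w)"
  have "run (leading L) (w @ [a]) = simcls L (z @ [a])"
    using snoc by (simp add: run_def leading_def z_def)
  moreover have "z \<in> simcls L w" unfolding z_def
    by (rule someI[of _ w]) (simp add: simcls_def simL_refl)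
  then have "simL L (w @ [a]) (z @ [a])" by (simp add: simcls_mem simL_cong)
  ultimately show ?case using simcls_eq simL_sym by metis
qed

lemma apP_refl: "approx Periodic L u x x" by (simp add: approx_def)
lemma apP_sym: "approx Periodic L u x y \<Longrightarrow> approx Periodic L u y x" by (simp add: approx_def)
lemma apP_trans: "approx Periodic L u x y \<Longrightarrow> approx Periodic L u y z \<Longrightarrow> approx Periodic L u x z"
  by (simp add: approx_def)
lemma apP_cong: assumes "approx Periodic L u x y" shows "approx Periodic L u (x @ [a]) (y @ [a])"
proof -
  have h: "per L u (x @ v) = per L u (y @ v)" for v using assms by (simp add: approx_def)
  show ?thesis unfolding approx_def kind.simps
  proof
    fix v show "per L u ((x @ [a]) @ v) = per L u ((y @ [a]) @ v)" using h[of "a # v"] by simp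
  qed
qed

lemma pcls_eq: assumes "approx Periodic L u x y" shows "pcls Periodic L u x = pcls Periodic L u y"
  using assms unfolding pcls_def approx_def by simp

lemma pcls_mem: "z \<in> pcls K L u x \<longleftrightarrow> approx K L u x z" by (simp add: pcls_def)

lemma run_progress: "run (progress Periodic L u) w = pcls Periodic L u w"
proof (induction w rule: rev_induct)
  case Nil then show ?case by (simp add: run_def progress_def)
next
  case (snoc a w)
  define z where "z = (SOME x. x \<in> pcls Periodic L u w)"
  have "run (progress Periodic L u) (w @ [a]) = pcls Periodic L u (z @ [a])"
    using snoc by (simp add: run_def progress_def z_def)
  moreover have "z \<in> pcls Periodic L u w" unfolding z_def
    by (rule someI[of _ w]) (simp add: pcls_def apP_refl)
  then have "approx Periodic L u (w @ [a]) (z @ [a])" by (simp add: pcls_mem apP_cong)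
  ultimately show ?case using pcls_eq apP_sym by metis
qed

lemma rep_iter: "concat (replicate i v) \<frown> v\<^sup>\<omega> = v\<^sup>\<omega>" if "v \<noteq> []"
proof (induction i)
  case 0 then show ?case by simp
next
  case (Suc i)
  have "concat (replicate (Suc i) v) \<frown> v\<^sup>\<omega> = v \<frown> (concat (replicate i v) \<frown> v\<^sup>\<omega>)"
    by simp
  also have "\<dots> = v \<frown> v\<^sup>\<omega>" using Suc.IH by (simp only:)
  also have "\<dots> = v\<^sup>\<omega>" by (rule iter_unroll[symmetric]) (use that in simp)
  finally show ?case .
qed

lemma concat_rep_nth: "m < k * length v \<Longrightarrow> concat (replicate k v) ! m = v ! (m mod length v)"
proof (induction k arbitrary: m)
  case 0 then show ?case by simp
next
  case (Suc k)
  show ?case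
  proof (cases "m < length v")
    case True then show ?thesis by (simp add: nth_append)
  next
    case False
    then have "m - length v < k * length v" using Suc.prems by simp
    then show ?thesis using False Suc.IH
      by (simp add: nth_append le_mod_geq)
  qed
qed

lemma iter_rep: "v \<noteq> [] \<Longrightarrow> k > 0 \<Longrightarrow> (concat (replicate k v))\<^sup>\<omega> = v\<^sup>\<omega>"
proof
  fix n assume v: "v \<noteq> []" and k: "k > 0"
  have len: "length (concat (replicate k v)) = k * length v" by (simp add: length_concat sum_list_replicate)
  have pos: "0 < k * length v" using v k by simp
  have "(concat (replicate k v))\<^sup>\<omega> n = concat (replicate k v) ! (n mod (k * length v))"
    using pos len by simp
  also have "\<dots> = v ! ((n mod (k * length v)) mod length v)"
    using pos by (simp add: concat_rep_nth)
  also have "\<dots> = v ! (n mod length v)" by (simp add: mod_mod_cancel)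
  finally show "(concat (replicate k v))\<^sup>\<omega> n = v\<^sup>\<omega> n" using v by simp
qed

section \<open>Finite index via Buchi automata\<close>

definition reachB :: "nat set \<Rightarrow> (nat \<Rightarrow> 'a \<Rightarrow> nat set) \<Rightarrow> 'a list \<Rightarrow> nat set" where
  "reachB I \<delta> x = {q. \<exists>p. p 0 \<in> I \<and> (\<forall>i<length x. p (Suc i) \<in> \<delta> (p i) (x ! i)) \<and> p (length x) = q}"

lemma reachB_sub: "I \<subseteq> Q \<Longrightarrow> (\<forall>q a. \<delta> q a \<subseteq> Q) \<Longrightarrow> reachB I \<delta> x \<subseteq> Q"
  unfolding reachB_def
proof clarify
  fix p assume "I \<subseteq> Q" "\<forall>q a. \<delta> q a \<subseteq> Q" "p 0 \<in> I"
    "\<forall>i<length x. p (Suc i) \<in> \<delta> (p i) (x ! i)"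
  then show "p (length x) \<in> Q"
    by (cases "length x") (auto, metis lessI subsetD)
qed

lemma reachB_sim:
  assumes L: "L = {w. \<exists>r. r 0 \<in> I \<and> (\<forall>i. r (Suc i) \<in> \<delta> (r i) (w i)) \<and> (\<exists>\<^sub>\<infinity> i. r i \<in> F)}"
    and eq: "reachB I \<delta> x = reachB I \<delta> y"
    and xw: "x \<frown> w \<in> L"
  shows "y \<frown> w \<in> L"
proof -
  obtain r where r0: "r 0 \<in> I" and rs: "\<forall>i. r (Suc i) \<in> \<delta> (r i) ((x \<frown> w) i)"
    and rF: "\<exists>\<^sub>\<infinity> i. r i \<in> F" using xw L by auto
  have "\<forall>i<length x. r (Suc i) \<in> \<delta> (r i) (x ! i)" using rs by (metis conc_fst)
  then have "r (length x) \<in> reachB I \<delta> x"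
    unfolding reachB_def using r0 by blast
  then have "r (length x) \<in> reachB I \<delta> y" using eq by simp
  then obtain p where p0: "p 0 \<in> I" and ps: "\<forall>i<length y. p (Suc i) \<in> \<delta> (p i) (y ! i)"
    and pe: "p (length y) = r (length x)" unfolding reachB_def by auto
  define r' where "r' i = (if i < length y then p i else r (i - length y + length x))" for i
  have "r' 0 \<in> I" using p0 r0 pe by (cases y) (auto simp: r'_def)
  moreover have "\<forall>i. r' (Suc i) \<in> \<delta> (r' i) ((y \<frown> w) i)"
  proof
    fix i
    show "r' (Suc i) \<in> \<delta> (r' i) ((y \<frown> w) i)"
    proof (cases "i < length y")
      case True
      then show ?thesis using ps pe by (cases "Suc i < length y") (auto simp: r'_def, metis Suc_lessI)
    next
      case False
      have "r (Suc (i - length y + length x)) \<in> \<delta> (r (i - length y + length x)) ((x \<frown> w) (i - length y + length x))"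
        using rs by blast
      moreover have "Suc (i - length y + length x) = Suc i - length y + length x" using False by simp
      ultimately show ?thesis using False by (simp add: r'_def)
    qed
  qed
  moreover have "\<exists>\<^sub>\<infinity> i. r' i \<in> F"
    unfolding INFM_nat
  proof
    fix m
    obtain n where n: "n > m + length x + length y" "r n \<in> F" using rF unfolding INFM_nat by blast
    let ?i = "n - length x + length y"
    have "?i > m" "r' ?i = r n" using n by (auto simp: r'_def)
    then show "\<exists>n>m. r' n \<in> F" using n by metis
  qed
  ultimately show ?thesis using L by blast
qed

lemma pump_aux:
  fixes Q I F :: "nat set" and \<delta> :: "nat \<Rightarrow> 'a \<Rightarrow> nat set"
  assumes fQ: "finite Q" and IQ: "I \<subseteq> Q" and dQ: "\<forall>q a. \<delta> q a \<subseteq> Q"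
    and L: "L = {w. \<exists>r. r 0 \<in> I \<and> (\<forall>i. r (Suc i) \<in> \<delta> (r i) (w i)) \<and> (\<exists>\<^sub>\<infinity> i. r i \<in> F)}"
  shows "\<exists>i j. i < j \<and> simL L (u @ concat (replicate i v)) (u @ concat (replicate j v))"
proof -
  define f where "f k = reachB I \<delta> (u @ concat (replicate k v))" for k
  have "range f \<subseteq> Pow Q" using reachB_sub[OF IQ dQ] by (auto simp: f_def)
  moreover have "finite (Pow Q)" using fQ by simp
  ultimately have "finite (range f)" by (rule finite_subset)
  then have "\<not> inj f" using finite_imageD infinite_UNIV_nat by blast
  then obtain a b where ab: "a \<noteq> b" "f a = f b" unfolding inj_def by blast
  have sim: "simL L (u @ concat (replicate k v)) (u @ concat (replicate k' v))"
    if "f k = f k'" for k k'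
  proof -
    have e: "reachB I \<delta> (u @ concat (replicate k v)) = reachB I \<delta> (u @ concat (replicate k' v))"
      using that by (simp add: f_def)
    show ?thesis unfolding simL_def
    proof
      fix w
      show "((u @ concat (replicate k v)) \<frown> w \<in> L) = ((u @ concat (replicate k' v)) \<frown> w \<in> L)"
        using reachB_sim[OF L e] reachB_sim[OF L e[symmetric]] by blast
    qed
  qed
  show ?thesis
  proof (cases "a < b")
    case True then show ?thesis using sim[OF ab(2)] by blast
  next
    case False then have "b < a" using ab by simp
    then show ?thesis using sim[OF ab(2)[symmetric]] by blast
  qed
qed

lemma omega_regular_pump:
  assumes "omega_regular L"
  shows "\<exists>i j. i < j \<and> simL L (u @ concat (replicate i v)) (u @ concat (replicate j v))"
  using assms unfolding omega_regular_def
  apply (elim exE conjE)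
  apply (rule pump_aux)
     apply assumption+
  done

lemma acc_P: "w \<in> dlang (progress Periodic L u0) \<longleftrightarrow> per L u0 w"
proof
  assume "w \<in> dlang (progress Periodic L u0)"
  then have "pcls Periodic L u0 w \<in> {pcls Periodic L u0 v | v. progress_acc Periodic L u0 v}"
    unfolding dlang_def mem_Collect_eq run_progress by (simp add: progress_def)
  then obtain w' where e: "pcls Periodic L u0 w = pcls Periodic L u0 w'" and p: "per L u0 w'"
    by (auto simp: progress_acc_def)
  have "w' \<in> pcls Periodic L u0 w'" by (simp add: pcls_mem apP_refl)
  then have "w' \<in> pcls Periodic L u0 w" using e by (simp only:)
  then have ap: "approx Periodic L u0 w w'" by (simp only: pcls_mem)
  have "\<forall>v. per L u0 (w @ v) = per L u0 (w' @ v)" using ap unfolding approx_def by simp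
  then have "per L u0 (w @ []) = per L u0 (w' @ [])" by (rule spec)
  then show "per L u0 w" using p by simp
next
  assume "per L u0 w"
  then have "pcls Periodic L u0 w \<in> {pcls Periodic L u0 v | v. progress_acc Periodic L u0 v}"
    by (auto simp: progress_acc_def)
  then show "w \<in> dlang (progress Periodic L u0)"
    unfolding dlang_def mem_Collect_eq run_progress by (simp add: progress_def)
qed

lemma per_sim: assumes "simL L u r" shows "per L r w \<longleftrightarrow> w \<noteq> [] \<and> u \<frown> w\<^sup>\<omega> \<in> L"
proof -
  have "(u \<frown> w\<^sup>\<omega> \<in> L) = (r \<frown> w\<^sup>\<omega> \<in> L)" using assms unfolding simL_def by blast
  then show ?thesis unfolding per_def by simp
qed

theorem lemma6:
  fixes L :: "('a::finite) word set"
    and K :: kind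
    and rep :: "'a list set \<Rightarrow> 'a list"
  assumes "omega_regular L"
    and "\<forall>x. rep (simcls L x) \<in> simcls L x"
  shows "UP_orig K (canonical K L rep) = UP (canonical K L rep)"
proof (cases "K = Periodic")
  case False
  then show ?thesis unfolding UP_orig_def UP_def fdfa_accepts_def by simp
next
  case KP: True
  have repsim: "simL L x (rep (simcls L x))" for x
    using assms(2) by (simp add: simcls_mem)
  have perL: "per L (rep (simcls L u)) w \<longleftrightarrow> w \<noteq> [] \<and> u \<frown> w\<^sup>\<omega> \<in> L" for u w
    by (rule per_sim[OF repsim])
  have "UP_orig K (canonical K L rep) \<subseteq> UP (canonical K L rep)"
  proof
    fix z assume "z \<in> UP_orig K (canonical K L rep)"
    then obtain u v where z: "z = u \<frown> v\<^sup>\<omega>" and v: "v \<noteq> []"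
      and "v \<in> dlang (progress Periodic L (rep (simcls L u)))"
      using KP by (auto simp: UP_orig_def canonical_def run_leading)
    then have "per L (rep (simcls L u)) v" by (simp only: acc_P)
    then have uv: "u \<frown> v\<^sup>\<omega> \<in> L" by (simp only: perL)
    obtain i j where ij: "i < j"
      and s: "simL L (u @ concat (replicate i v)) (u @ concat (replicate j v))"
      using omega_regular_pump[OF assms(1)] by blast
    define x where "x = u @ concat (replicate i v)"
    define y where "y = concat (replicate (j - i) v)"
    have ye: "y \<noteq> []" using v ij by (simp add: y_def)
    have yw: "y\<^sup>\<omega> = v\<^sup>\<omega>" using iter_rep[OF v] ij by (simp add: y_def)
    have j: "j = i + (j - i)" using ij by simp
    have "concat (replicate j v) = concat (replicate i v) @ y"
      by (subst j, simp only: replicate_add concat_append y_def)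
    then have xy: "x @ y = u @ concat (replicate j v)" by (simp add: x_def)
    have "x \<frown> y\<^sup>\<omega> = u \<frown> (concat (replicate i v) \<frown> v\<^sup>\<omega>)"
      by (simp only: yw x_def conc_conc)
    also have "\<dots> = z" using z rep_iter[OF v, of i] by simp
    finally have zxy: "z = x \<frown> y\<^sup>\<omega>" by simp
    have "x \<frown> y\<^sup>\<omega> \<in> L" using zxy z uv by simp
    then have "per L (rep (simcls L x)) y" using perL ye by blast
    then have a1: "y \<in> dlang (progress Periodic L (rep (simcls L x)))" by (simp only: acc_P)
    have a2: "simcls L (x @ y) = simcls L x" using s xy by (simp add: simcls_eq_iff x_def simL_sym)
    have "fdfa_accepts (canonical K L rep) x y"
      using KP a1 a2 unfolding fdfa_accepts_def canonical_def by (simp add: run_leading)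
    then show "z \<in> UP (canonical K L rep)" using zxy ye unfolding UP_def by blast
  qed
  moreover have "UP (canonical K L rep) \<subseteq> UP_orig K (canonical K L rep)"
    using KP unfolding UP_orig_def UP_def fdfa_accepts_def by auto
  ultimately show ?thesis by blast
qed

end
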